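(* Let $\mathcal{Q}=\mathcal{Q}_\ell(T,X,Y)$ and let $\sigma^{\mathcal{Q}}$ be the least monoid congruence on $\mathcal{Q}$ containing $Y\times Y$. If $\alpha=h_1h_2\cdots h_n\in\mathcal{Q}$ is in $H^{\mathcal{P}}$-canonical form, where $h_i=s_ie_i\in H^{\mathcal{Q}}$ ($s_i\in T$, $e_i\in Y$) for $1\le i\le n$, then there exists $e\in Y$ with $s_1s_2\cdots s_n\cdot e\in Y$ and $\alpha\,\sigma^{\mathcal{Q}}\,s_1s_2\cdots s_ne$.
   Context: Let $T$ be a monoid, $X$ a semilattice with identity $1_X$ (ordered by $e\le f$ iff $ef=e$) with an order-preserving left action of $T$. $\mathcal{P}_\ell(T,X)$: let $T*X$ be the semigroup free product acting on $X$ (elements of $X$ act by multiplication), $\omega^+=\omega\cdot1_X$, $\sim$ the semigroup congruence generated by $\{(\alpha^+\alpha,\alpha)\}\cup\{(1_T,1_X)\}$, and $\mathcal{P}_\ell(T,X)=(T*X)/\sim$ with $[\alpha]^+=[\alpha^+]$; $X$, $T$ are identified with their injective images. It is a left Ehresmann monoid with projections $X$, unique $T$-normal forms $t_0e_1t_1\cdots e_nt_n$ ($n\ge0$, $e_i\in X\setminus\{1\}$, $t_1,\dots,t_{n-1}\in T\setminus\{1\}$, $e_i<(t_ie_{i+1}\cdots e_nt_n)^+$), and unary operation $a^*=e_n$ if $n\ge1$, $t_n=1$, and $a^*=1$ otherwise. $H^{\mathcal{P}}=\{te:t\in T,e\in X\}$; an $H^{\mathcal{P}}$-canonical form is an expression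 $h_1\cdots h_n$, $h_i\in H^{\mathcal{P}}$, with $h_i^*<h_{i+1}^+$ ($1\le i<n$) and $h_i\notin X$ ($2\le i\le n$). Let $Y$ be a subsemilattice of $X$ having an identity, satisfying (A): for all $t\in T$, $e,f\in Y$ with $e\le f$, $t\cdot f\in Y$ implies $t\cdot e\in Y$; (B): for all $t\in T$ there is $g\in Y$ with $t\cdot g\in Y$. $H^{\mathcal{Q}}=\{te:t\in T,e\in Y,t\cdot e\in Y\}$, and $\mathcal{Q}_\ell(T,X,Y)$ is the subsemigroup of $\mathcal{P}_\ell(T,X)$ generated by $H^{\mathcal{Q}}$; it is a monoid with identity the identity of $Y$. *)

theory Defs
  imports Main
begin

text \<open>
  X is a semilattice with identity,
  rendered as a meet-semilattice with top: product e f = inf e f, identity 1_X = top,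
  and the order e <= f iff inf e f = e is the order of the type class.

  Elements of the semigroup free product T*X are represented by (nonempty) words over
  'a + 'x (Inl for letters of T, Inr for letters of X); the free product is the quotient
  of this free semigroup by merging adjacent letters from the same factor.
\<close>

type_synonym ('a, 'x) word = "('a + 'x) list"

definition wact :: "('a \<Rightarrow> 'x \<Rightarrow> 'x) \<Rightarrow> ('a, 'x::semilattice_inf) word \<Rightarrow> 'x \<Rightarrow> 'x" where
  "wact act w x = foldr (\<lambda>l y. case l of Inl t \<Rightarrow> act t y | Inr e \<Rightarrow> inf e y) w x"

definition pplus :: "('a \<Rightarrow> 'x \<Rightarrow> 'x) \<Rightarrow> ('a, 'x::bounded_semilattice_inf_top) word \<Rightarrow> 'x" where
  "pplus act w = wact act w top"

text \<open>The congruence on words whose quotient is P_l(T,X): generated by the free-product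
  merging relations (so that we work in T*X), the pairs (alpha^+ alpha, alpha), and (1_T, 1_X).\<close>
inductive Pc :: "('a::monoid_mult \<Rightarrow> 'x::bounded_semilattice_inf_top \<Rightarrow> 'x)
    \<Rightarrow> ('a, 'x) word \<Rightarrow> ('a, 'x) word \<Rightarrow> bool" for act where
  mergeT: "Pc act [Inl s, Inl t] [Inl (s * t)]"
| mergeX: "Pc act [Inr e, Inr f] [Inr (inf e f)]"
| plus: "w \<noteq> [] \<Longrightarrow> Pc act (Inr (pplus act w) # w) w"
| unit: "Pc act [Inl 1] [Inr top]"
| refl: "Pc act w w"
| sym: "Pc act u v \<Longrightarrow> Pc act v u"
| trans: "Pc act u v \<Longrightarrow> Pc act v w \<Longrightarrow> Pc act u w"
| compat: "Pc act u v \<Longrightarrow> Pc act (p @ u @ q) (p @ v @ q)"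

text \<open>T-normal forms t_0 e_1 t_1 ... e_n t_n, represented as (t_0, [(e_1,t_1),...,(e_n,t_n)]).\<close>
definition nfword :: "'a \<times> ('x \<times> 'a) list \<Rightarrow> ('a, 'x) word" where
  "nfword nf = Inl (fst nf) # concat (map (\<lambda>(e, t). [Inr e, Inl t]) (snd nf))"

definition is_Tnf :: "('a::monoid_mult \<Rightarrow> 'x::bounded_semilattice_inf_top \<Rightarrow> 'x)
    \<Rightarrow> 'a \<times> ('x \<times> 'a) list \<Rightarrow> bool" where
  "is_Tnf act nf \<longleftrightarrow>
     (let ps = snd nf; n = length ps in
       (\<forall>i<n. fst (ps ! i) \<noteq> top) \<and>
       (\<forall>i. i + 1 < n \<longrightarrow> snd (ps ! i) \<noteq> 1) \<and>
       (\<forall>i<n. fst (ps ! i) <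
           pplus act (nfword (snd (ps ! i), drop (Suc i) ps))))"

definition nfstar :: "'a::monoid_mult \<times> ('x::bounded_semilattice_inf_top \<times> 'a) list \<Rightarrow> 'x" where
  "nfstar nf = (if snd nf \<noteq> [] \<and> snd (last (snd nf)) = 1 then fst (last (snd nf)) else top)"

text \<open>The unary operation a^* of P_l(T,X), read off the unique T-normal form of a.\<close>
definition pstar :: "('a::monoid_mult \<Rightarrow> 'x::bounded_semilattice_inf_top \<Rightarrow> 'x)
    \<Rightarrow> ('a, 'x) word \<Rightarrow> 'x" where
  "pstar act w = (THE x. \<exists>nf. is_Tnf act nf \<and> Pc act w (nfword nf) \<and> nfstar nf = x)"

definition hw :: "'a \<times> 'x \<Rightarrow> ('a, 'x) word" where
  "hw h = [Inl (fst h), Inr (snd h)]"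

definition HQ :: "('a \<Rightarrow> 'x \<Rightarrow> 'x) \<Rightarrow> 'x set \<Rightarrow> ('a \<times> 'x) set" where
  "HQ act Y = {(t, e). e \<in> Y \<and> act t e \<in> Y}"

definition Qw :: "('a::monoid_mult \<Rightarrow> 'x::bounded_semilattice_inf_top \<Rightarrow> 'x) \<Rightarrow> 'x set
    \<Rightarrow> ('a, 'x) word set" where
  "Qw act Y = {w. \<exists>hs. hs \<noteq> [] \<and> set hs \<subseteq> HQ act Y \<and> Pc act w (concat (map hw hs))}"

text \<open>sigma^Q: the least (monoid) congruence on Q containing Y x Y, as a relation on words of Q
  (which contains the identification of P).\<close>
inductive sigmaQ :: "('a::monoid_mult \<Rightarrow> 'x::bounded_semilattice_inf_top \<Rightarrow> 'x) \<Rightarrow> 'x set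
    \<Rightarrow> ('a, 'x) word \<Rightarrow> ('a, 'x) word \<Rightarrow> bool" for act Y where
  eq: "u \<in> Qw act Y \<Longrightarrow> v \<in> Qw act Y \<Longrightarrow> Pc act u v \<Longrightarrow> sigmaQ act Y u v"
| YY: "e \<in> Y \<Longrightarrow> f \<in> Y \<Longrightarrow> sigmaQ act Y [Inr e] [Inr f]"
| sym: "sigmaQ act Y u v \<Longrightarrow> sigmaQ act Y v u"
| trans: "sigmaQ act Y u v \<Longrightarrow> sigmaQ act Y v w \<Longrightarrow> sigmaQ act Y u w"
| left: "sigmaQ act Y u v \<Longrightarrow> p \<in> Qw act Y \<Longrightarrow> sigmaQ act Y (p @ u) (p @ v)"
| right: "sigmaQ act Y u v \<Longrightarrow> q \<in> Qw act Y \<Longrightarrow> sigmaQ act Y (u @ q) (v @ q)"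

end

theory Submission
  imports Defs
begin

lemma Pc_app:
  assumes "Pc act u u'" "Pc act v v'"
  shows "Pc act (u @ v) (u' @ v')"
proof -
  have "Pc act ([] @ u @ v) ([] @ u' @ v)" by (rule Pc.compat[OF assms(1)])
  moreover have "Pc act (u' @ v @ []) (u' @ v' @ [])" by (rule Pc.compat[OF assms(2)])
  ultimately show ?thesis using Pc.trans by simp
qed

lemma Qw_Pc: "Pc act u v \<Longrightarrow> v \<in> Qw act Y \<Longrightarrow> u \<in> Qw act Y"
  unfolding Qw_def by (blast intro: Pc.trans)

lemma Qw_app: "u \<in> Qw act Y \<Longrightarrow> v \<in> Qw act Y \<Longrightarrow> u @ v \<in> Qw act Y"
proof -
  assume "u \<in> Qw act Y" "v \<in> Qw act Y"
  then obtain hs1 hs2 where a: "hs1 \<noteq> []" "set hs1 \<subseteq> HQ act Y" "Pc act u (concat (map hw hs1))"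
    and b: "hs2 \<noteq> []" "set hs2 \<subseteq> HQ act Y" "Pc act v (concat (map hw hs2))"
    unfolding Qw_def by blast
  have "Pc act (u @ v) (concat (map hw (hs1 @ hs2)))" using Pc_app[OF a(3) b(3)] by simp
  then show ?thesis unfolding Qw_def using a b by (intro CollectI exI[of _ "hs1 @ hs2"]) auto
qed

lemma hw_Qw: "h \<in> HQ act Y \<Longrightarrow> hw h \<in> Qw act Y"
  unfolding Qw_def by (intro CollectI exI[of _ "[h]"]) (auto intro: Pc.refl)

lemma HQ_Qw: "(s, e) \<in> HQ act Y \<Longrightarrow> [Inl s, Inr e] \<in> Qw act Y"
  using hw_Qw[of "(s,e)"] by (simp add: hw_def)

lemma sig_Pc: "Pc act u v \<Longrightarrow> v \<in> Qw act Y \<Longrightarrow> sigmaQ act Y u v"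
  by (rule sigmaQ.eq[OF Qw_Pc])

lemma pplus2: "pplus act [Inl s, Inr e] = act s e"
  by (simp add: pplus_def wact_def)

lemma Y_Qw:
  assumes act_one: "\<And>x. act 1 x = x" and "e \<in> Y"
  shows "[Inr e] \<in> Qw act Y"
proof -
  have h: "(1, e) \<in> HQ act Y" using assms by (simp add: HQ_def)
  have "Pc act ([] @ [Inl 1] @ [Inr e]) ([] @ [Inr top] @ [Inr e])" by (rule Pc.compat[OF Pc.unit])
  moreover have "Pc act [Inr top, Inr e] [Inr (inf top e)]" by (rule Pc.mergeX)
  ultimately have "Pc act [Inl 1, Inr e] [Inr e]" using Pc.trans by simp
  then have "Pc act [Inr e] [Inl 1, Inr e]" by (rule Pc.sym)
  then show ?thesis using HQ_Qw[OF h] by (rule Qw_Pc)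
qed

lemma shrink:
  fixes act :: "'a::monoid_mult \<Rightarrow> 'x::bounded_semilattice_inf_top \<Rightarrow> 'x"
  assumes act_one: "\<And>x. act 1 x = x"
    and Y_inf: "\<And>e f. e \<in> Y \<Longrightarrow> f \<in> Y \<Longrightarrow> inf e f \<in> Y"
    and condA: "\<And>t e f. e \<in> Y \<Longrightarrow> f \<in> Y \<Longrightarrow> e \<le> f \<Longrightarrow> act t f \<in> Y \<Longrightarrow> act t e \<in> Y"
    and h: "(s, e) \<in> HQ act Y" and g: "g \<in> Y"
  shows "sigmaQ act Y [Inl s, Inr (inf e g)] [Inl s, Inr e]"
proof -
  have e: "e \<in> Y" "act s e \<in> Y" using h by (auto simp: HQ_def)
  have m: "inf e g \<in> Y" using Y_inf e g by auto
  have hm: "(s, inf e g) \<in> HQ act Y" using condA[OF m e(1) _ e(2)] m by (simp add: HQ_def)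
  have p1: "Pc act ([Inl s] @ [Inr e, Inr g] @ []) ([Inl s] @ [Inr (inf e g)] @ [])"
    by (rule Pc.compat[OF Pc.mergeX])
  have p2: "Pc act ([Inl s] @ [Inr e, Inr e] @ []) ([Inl s] @ [Inr (inf e e)] @ [])"
    by (rule Pc.compat[OF Pc.mergeX])
  have q1: "[Inl s, Inr e, Inr g] \<in> Qw act Y"
    using Qw_app[OF HQ_Qw[OF h] Y_Qw[of act, OF act_one g]] by simp
  have q2: "[Inl s, Inr e, Inr e] \<in> Qw act Y"
    using Qw_app[OF HQ_Qw[OF h] Y_Qw[of act, OF act_one e(1)]] by simp
  have s1: "sigmaQ act Y [Inl s, Inr (inf e g)] [Inl s, Inr e, Inr g]"
    using Pc.sym[OF p1] by (intro sig_Pc q1) simp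
  have s2: "sigmaQ act Y ([Inl s, Inr e] @ [Inr g]) ([Inl s, Inr e] @ [Inr e])"
    by (rule sigmaQ.left[OF sigmaQ.YY[OF g e(1)] HQ_Qw[OF h]])
  have s3: "sigmaQ act Y [Inl s, Inr e, Inr e] [Inl s, Inr e]"
    using p2 by (intro sig_Pc HQ_Qw[OF h]) simp
  show ?thesis using s1 s2 s3 by (auto intro: sigmaQ.trans)
qed

lemma swap:
  fixes act :: "'a::monoid_mult \<Rightarrow> 'x::bounded_semilattice_inf_top \<Rightarrow> 'x"
  assumes act_one: "\<And>x. act 1 x = x"
    and Y_inf: "\<And>e f. e \<in> Y \<Longrightarrow> f \<in> Y \<Longrightarrow> inf e f \<in> Y"
    and condA: "\<And>t e f. e \<in> Y \<Longrightarrow> f \<in> Y \<Longrightarrow> e \<le> f \<Longrightarrow> act t f \<in> Y \<Longrightarrow> act t e \<in> Y"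
    and h: "(s, e) \<in> HQ act Y" and h2: "(s, g) \<in> HQ act Y"
  shows "sigmaQ act Y [Inl s, Inr e] [Inl s, Inr g]"
proof -
  have "e \<in> Y" "g \<in> Y" using h h2 by (auto simp: HQ_def)
  have a: "sigmaQ act Y [Inl s, Inr (inf e g)] [Inl s, Inr e]"
    by (rule shrink[where act=act and Y=Y, OF act_one Y_inf condA h \<open>g \<in> Y\<close>])
  have b: "sigmaQ act Y [Inl s, Inr (inf g e)] [Inl s, Inr g]"
    by (rule shrink[where act=act and Y=Y, OF act_one Y_inf condA h2 \<open>e \<in> Y\<close>])
  show ?thesis using sigmaQ.trans[OF sigmaQ.sym[OF a] b[unfolded inf_commute[of g e]]] .
qed

lemma two:
  fixes act :: "'a::monoid_mult \<Rightarrow> 'x::bounded_semilattice_inf_top \<Rightarrow> 'x"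
  assumes act_one: "\<And>x. act 1 x = x"
    and act_mult: "\<And>s t x. act (s * t) x = act s (act t x)"
    and Y_inf: "\<And>e f. e \<in> Y \<Longrightarrow> f \<in> Y \<Longrightarrow> inf e f \<in> Y"
    and condA: "\<And>t e f. e \<in> Y \<Longrightarrow> f \<in> Y \<Longrightarrow> e \<le> f \<Longrightarrow> act t f \<in> Y \<Longrightarrow> act t e \<in> Y"
    and condB: "\<And>t. \<exists>g\<in>Y. act t g \<in> Y"
    and h1: "(s, e) \<in> HQ act Y" and h2: "(t, f) \<in> HQ act Y"
  shows "\<exists>f'\<in>Y. act (s * t) f' \<in> Y \<and> sigmaQ act Y [Inl s, Inr e, Inl t, Inr f] [Inl (s * t), Inr f']"
proof -
  obtain g where g: "g \<in> Y" "act (s * t) g \<in> Y" using condB by blast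
  have f: "f \<in> Y" "act t f \<in> Y" using h2 by (auto simp: HQ_def)
  define f' where "f' = inf f g"
  have f'Y: "f' \<in> Y" using Y_inf f g f'_def by auto
  have tf': "act t f' \<in> Y" using condA[OF f'Y f(1) _ f(2)] f'_def by simp
  have stf': "act (s * t) f' \<in> Y" using condA[OF f'Y g(1) _ g(2)] f'_def by simp
  have hf': "(t, f') \<in> HQ act Y" using f'Y tf' by (simp add: HQ_def)
  define k where "k = act t f'"
  have hk: "(s, k) \<in> HQ act Y" using tf' stf' act_mult by (simp add: HQ_def k_def)
  have a1: "sigmaQ act Y [Inl t, Inr f] [Inl t, Inr f']"
    by (rule swap[where act=act and Y=Y, OF act_one Y_inf condA h2 hf'])
  have a2: "sigmaQ act Y ([Inl s, Inr e] @ [Inl t, Inr f]) ([Inl s, Inr e] @ [Inl t, Inr f'])"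
    by (rule sigmaQ.left[OF a1 HQ_Qw[OF h1]])
  have a3: "sigmaQ act Y ([Inl s, Inr e] @ [Inl t, Inr f']) ([Inl s, Inr k] @ [Inl t, Inr f'])"
    by (rule sigmaQ.right[OF swap[where act=act and Y=Y, OF act_one Y_inf condA h1 hk] HQ_Qw[OF hf']])
  have p1: "Pc act ([Inl s] @ (Inr (pplus act [Inl t, Inr f']) # [Inl t, Inr f']) @ [])
                   ([Inl s] @ [Inl t, Inr f'] @ [])"
    by (rule Pc.compat[OF Pc.plus]) simp
  have p2: "Pc act ([] @ [Inl s, Inl t] @ [Inr f']) ([] @ [Inl (s * t)] @ [Inr f'])"
    by (rule Pc.compat[OF Pc.mergeT])
  have "Pc act [Inl s, Inr k, Inl t, Inr f'] [Inl (s * t), Inr f']"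
    using Pc.trans[OF p1[simplified pplus2 append.simps append_Nil2] p2[simplified]] by (simp add: k_def)
  then have a4: "sigmaQ act Y [Inl s, Inr k, Inl t, Inr f'] [Inl (s * t), Inr f']"
    by (rule sig_Pc) (rule HQ_Qw, simp add: HQ_def f'Y stf')
  have a23: "sigmaQ act Y [Inl s, Inr e, Inl t, Inr f] [Inl s, Inr k, Inl t, Inr f']"
    using sigmaQ.trans[OF a2 a3] by simp
  have fin: "sigmaQ act Y [Inl s, Inr e, Inl t, Inr f] [Inl (s * t), Inr f']"
    by (rule sigmaQ.trans[OF a23 a4])
  show ?thesis
  proof (rule bexI[of _ f'])
    show "f' \<in> Y" by (rule f'Y)
    show "act (s * t) f' \<in> Y \<and> sigmaQ act Y [Inl s, Inr e, Inl t, Inr f] [Inl (s * t), Inr f']"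
      using stf' fin by (rule conjI)
  qed
qed

theorem mainTheorem16:
  fixes act :: "'a::monoid_mult \<Rightarrow> 'x::bounded_semilattice_inf_top \<Rightarrow> 'x"
    and Y :: "'x set"
    and hs :: "('a \<times> 'x) list"
  assumes act_one: "\<And>x. act 1 x = x"
    and act_mult: "\<And>s t x. act (s * t) x = act s (act t x)"
    and act_mono: "\<And>t x y. x \<le> y \<Longrightarrow> act t x \<le> act t y"
    and Y_inf: "\<And>e f. e \<in> Y \<Longrightarrow> f \<in> Y \<Longrightarrow> inf e f \<in> Y"
    and Y_id: "\<exists>u\<in>Y. \<forall>y\<in>Y. inf u y = y"
    and condA: "\<And>t e f. e \<in> Y \<Longrightarrow> f \<in> Y \<Longrightarrow> e \<le> f \<Longrightarrow> act t f \<in> Y \<Longrightarrow> act t e \<in> Y"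
    and condB: "\<And>t. \<exists>g\<in>Y. act t g \<in> Y"
    and hs_ne: "hs \<noteq> []"
    and hs_HQ: "set hs \<subseteq> HQ act Y"
    and canon_star: "\<And>i. Suc i < length hs \<Longrightarrow>
                       pstar act (hw (hs ! i)) < pplus act (hw (hs ! Suc i))"
    and canon_notX: "\<And>i. 0 < i \<Longrightarrow> i < length hs \<Longrightarrow> \<not> (\<exists>x. Pc act (hw (hs ! i)) [Inr x])"
  shows "\<exists>e\<in>Y. act (prod_list (map fst hs)) e \<in> Y \<and>
           sigmaQ act Y (concat (map hw hs)) [Inl (prod_list (map fst hs)), Inr e]"
proof -
  have two': "\<And>s e t f. (s, e) \<in> HQ act Y \<Longrightarrow> (t, f) \<in> HQ act Y \<Longrightarrow>
    \<exists>f'\<in>Y. act (s * t) f' \<in> Y \<and> sigmaQ act Y [Inl s, Inr e, Inl t, Inr f] [Inl (s * t), Inr f']"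
    by (rule two[where act=act and Y=Y, OF act_one act_mult Y_inf condA condB])
  show ?thesis
  using hs_ne hs_HQ
proof (induction hs)
  case Nil
  then show ?case by simp
next
  case (Cons h rest)
  obtain s e where h: "h = (s, e)" by (cases h)
  have hQ: "(s, e) \<in> HQ act Y" using Cons.prems h by auto
  show ?case
  proof (cases "rest = []")
    case True
    have "sigmaQ act Y [Inl s, Inr e] [Inl s, Inr e]"
      by (rule sig_Pc[OF Pc.refl HQ_Qw[OF hQ]])
    then show ?thesis using True h hQ by (auto simp: hw_def HQ_def)
  next
    case False
    then obtain f where f: "f \<in> Y" "act (prod_list (map fst rest)) f \<in> Y"
      and sf: "sigmaQ act Y (concat (map hw rest)) [Inl (prod_list (map fst rest)), Inr f]"
      using Cons.IH[OF False] Cons.prems(2) by auto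
    let ?t = "prod_list (map fst rest)"
    have hf: "(?t, f) \<in> HQ act Y" using f by (simp add: HQ_def)
    have l: "sigmaQ act Y ([Inl s, Inr e] @ concat (map hw rest)) ([Inl s, Inr e] @ [Inl ?t, Inr f])"
      by (rule sigmaQ.left[OF sf HQ_Qw[OF hQ]])
    from two'[OF hQ hf]
    obtain f' where f': "f' \<in> Y" "act (s * ?t) f' \<in> Y"
      "sigmaQ act Y [Inl s, Inr e, Inl ?t, Inr f] [Inl (s * ?t), Inr f']"
      by (elim bexE conjE)
    have "sigmaQ act Y (concat (map hw (h # rest))) [Inl (s * ?t), Inr f']"
      using sigmaQ.trans[OF l[simplified] f'(3)] h by (simp add: hw_def)
    moreover have "prod_list (map fst (h # rest)) = s * ?t" using h by simp
    ultimately show ?thesis using f' by (metis)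
  qed
qed
qed

end
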